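(* Let $g,h,\lambda_{1,1}$ be fixed parameters, and consider the transformation of triples $(A,B,C)=(\lambda_{1,4}^{(i-1)},\lambda_{1,3}^{(i-1)},\lambda_{1,4}^{(i)})$ of nonzero quantities given by $$A\mapsto C,\qquad B\mapsto \frac{BC+h\lambda_{1,1}}{A},\qquad C\mapsto \frac{C^2}{A}+\frac{h\lambda_{1,1}C}{AB}+\frac{g\lambda_{1,1}}{B}.$$ Then the two functions $$G_\gamma=\frac{C}{A}+\frac{A}{C}+\frac{h\lambda_{1,1}}{BA}+\frac{g\lambda_{1,1}}{BC},\qquad \lambda_{4,4}=\frac{gA}{B}+\frac{hC}{B}$$ are invariant under this transformation.
   Context: This is the action of the Dehn twist around the geodesic $\gamma$ separating the two holes of a Riemann sphere with two holes, each with two bordered cusps ($PIII^{D_6}$ case): $\lambda_{\alpha,\beta}^{(i)}$ denotes the $\lambda$-length of the arc between bordered cusps $\alpha$ and $\beta$ winding $i$ times around the lower hole, $\lambda_{1,1}$ is the $\lambda$-length of the arc from cusp $1$ back to itself, and $g,h$ are $\lambda$-lengths of arcs on the other hole. The claim is an identity of rational functions. *)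

theory Defs
  imports Main
begin

definition dehnT :: "'a::field \<Rightarrow> 'a \<Rightarrow> 'a \<Rightarrow> 'a \<Rightarrow> 'a \<Rightarrow> 'a \<Rightarrow> 'a \<times> 'a \<times> 'a" where
  "dehnT g h l11 A B C =
     (C, (B * C + h * l11) / A, C^2 / A + h * l11 * C / (A * B) + g * l11 / B)"

definition Ggamma :: "'a::field \<Rightarrow> 'a \<Rightarrow> 'a \<Rightarrow> 'a \<times> 'a \<times> 'a \<Rightarrow> 'a" where
  "Ggamma g h l11 t = (case t of (A, B, C) \<Rightarrow>
     C / A + A / C + h * l11 / (B * A) + g * l11 / (B * C))"

definition lambda44 :: "'a::field \<Rightarrow> 'a \<Rightarrow> 'a \<times> 'a \<times> 'a \<Rightarrow> 'a" where
  "lambda44 g h t = (case t of (A, B, C) \<Rightarrow> g * A / B + h * C / B)"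

end

theory Submission
  imports Defs
begin

theorem mainTheorem11:
  fixes g h l11 A B C :: "'a::field"
  assumes "A \<noteq> 0" and "B \<noteq> 0" and "C \<noteq> 0"
    and "fst (snd (dehnT g h l11 A B C)) \<noteq> 0"
    and "snd (snd (dehnT g h l11 A B C)) \<noteq> 0"
  shows "Ggamma g h l11 (dehnT g h l11 A B C) = Ggamma g h l11 (A, B, C)
       \<and> lambda44 g h (dehnT g h l11 A B C) = lambda44 g h (A, B, C)"
proof -
  define B' where "B' = B * C + h * l11"
  define C' where "C' = C^2 * B + h * l11 * C + g * l11 * A"
  have b: "B' \<noteq> 0" using assms(1,4) by (auto simp: dehnT_def B'_def)
  have c: "C' \<noteq> 0" using assms(1,2,5) by (auto simp: dehnT_def C'_def field_simps)
  have e1: "(B * C + h * l11) / A = B' / A" by (simp add: B'_def)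
  have e2: "C^2 / A + h * l11 * C / (A * B) + g * l11 / B = C' / (A*B)"
    using assms(1,2) by (simp add: C'_def field_simps power2_eq_square)
  have G: "C' / (A*B) / C + C / (C' / (A*B)) + h * l11 / (B' / A * C) + g * l11 / (B' / A * (C' / (A*B)))
     = C / A + A / C + h * l11 / (B * A) + g * l11 / (B * C)"
  proof -
    have "C' / (A*B) / C + C / (C' / (A*B)) + h * l11 / (B' / A * C) + g * l11 / (B' / A * (C' / (A*B)))
      = (C'*C'*B' + C*C*A*A*B*B*B' + h*l11*A*A*B*C' + g*l11*A*A*A*B*B*C)/(A*B*C*B'*C')"
      using assms(1-3) b c by (simp add: field_simps)
    also have "C'*C'*B' + C*C*A*A*B*B*B' + h*l11*A*A*B*C' + g*l11*A*A*A*B*B*C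
       = (C*C*B + A*A*B + h*l11*C + g*l11*A) * (B'*C')"
      unfolding B'_def C'_def by (simp add: algebra_simps power2_eq_square)
    finally show ?thesis using assms(1-3) b c by (simp add: field_simps)
  qed
  have L: "g * C / (B' / A) + h * (C' / (A*B)) / (B' / A) = g * A / B + h * C / B"
  proof -
    have "g * C / (B' / A) + h * (C' / (A*B)) / (B' / A) = (g*C*A*B + h*C')/(B*B')"
      using assms(1-3) b c by (simp add: field_simps)
    also have "g*C*A*B + h*C' = (g*A + h*C)*B'"
      unfolding B'_def C'_def by (simp add: algebra_simps power2_eq_square)
    finally show ?thesis using assms(1-3) b c by (simp add: field_simps)
  qed
  show ?thesis
    unfolding dehnT_def e1 e2 Ggamma_def lambda44_def prod.case using G L by (simp only: prod.case)
qed

end
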